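(* Assume the setting below. Fix $\boldsymbol\delta\in\mathbb R^n$ and $b\in\mathbb R$. Define $\tilde{\boldsymbol Y}^{\texttt{mp}}_{\boldsymbol Z,\boldsymbol\delta,b}(0)$ and $\tilde{\boldsymbol Y}^{\texttt{mn}}_{\boldsymbol Z,\boldsymbol\delta,b}(0)$ in $\overline{\mathbb R}^n$ by $$\tilde Y^{\texttt{mp}}_{\boldsymbol Z,\boldsymbol\delta,b,i}(0)=\begin{cases}\min\{Y_i-\delta_i,b\},& Z_i=1,M_i=1,\\ b,& Z_i=1,M_i=0,\\ Y_i,& Z_i=0,M_i=1,\\ b,& Z_i=0,M_i=0,\end{cases}\qquad \tilde Y^{\texttt{mn}}_{\boldsymbol Z,\boldsymbol\delta,b,i}(0)=\begin{cases}Y_i-\delta_i,& Z_i=1,M_i=1,\\ -\infty,& Z_i=1,M_i=0,\\ Y_i,& Z_i=0,M_i=1,\\ b,& Z_i=0,M_i=0.\end{cases}$$ (a) If $M_i(1)\ge M_i(0)$ for all $1\le i\le n$, then $\tilde p^{\texttt{mp}}_{\boldsymbol Z,\boldsymbol\delta,b}:=G_{\mathrm R,\phi}\big(t_{\mathrm R,\phi}(\boldsymbol Z,\tilde{\boldsymbol Y}^{\texttt{mp}}_{\boldsymbol Z,\boldsymbol\delta,b}(0))\big)$ is a valid p-value for $H_{\boldsymbol\delta}:\boldsymbol\tau=\boldsymbol\delta$. (b) If $M_i(1)\le M_i(0)$ for all $1\le i\le n$, then $\tilde p^{\texttt{mn}}_{\boldsymbol Z,\boldsymbol\delta,b}:=G_{\mathrm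 R,\phi}\big(t_{\mathrm R,\phi}(\boldsymbol Z,\tilde{\boldsymbol Y}^{\texttt{mn}}_{\boldsymbol Z,\boldsymbol\delta,b}(0))\big)$ is a valid p-value for $H_{\boldsymbol\delta}$. Here valid means: if $H_{\boldsymbol\delta}$ holds, $\mathbb P(p\le\alpha)\le\alpha$ for all $\alpha\in(0,1)$.
   Context: There are $n$ units. Unit $i$ has fixed potential outcomes $Y_i^\star(0),Y_i^\star(1)\in\mathbb R$ and fixed potential missingness indicators $M_i(0),M_i(1)\in\{0,1\}$; $\tau_i=Y_i^\star(1)-Y_i^\star(0)$, $\boldsymbol\tau=(\tau_1,\dots,\tau_n)^\intercal$. The assignment $\boldsymbol Z\in\{0,1\}^n$ is drawn from a completely randomized experiment (CRE): for fixed positive integers $n_1,n_0$, $n_1+n_0=n$, $\boldsymbol Z$ is uniform over vectors in $\{0,1\}^n$ with exactly $n_1$ ones, independently of all potential outcomes and missingness indicators; probabilities are over $\boldsymbol Z$. Observed missingness $M_i=Z_iM_i(1)+(1-Z_i)M_i(0)$; the realized outcome $Z_iY_i^\star(1)+(1-Z_i)Y_i^\star(0)$ is observed, and denoted $Y_i$, only when $M_i=1$. Test statistics: $\overline{\mathbb R}=\mathbb R\cup\{\pm\infty\}$; $\psi_{i,j}(y,y')=\mathbf 1\{y>y'\}+\mathbf 1\{y=y'\}\mathbf 1\{i\ge j\}$ for $y,y'\in\overline{\mathbb R}$; $\mathrm{rank}_i(\boldsymbol y)=\sum_{j=1}^n\psi_{i,j}(y_i,y_j)$. $\phi$ is a fixed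 nondecreasing real function on the nonnegative integers. $t_{\mathrm R,\phi}(\boldsymbol z,\boldsymbol y)$ is either $\sum_i z_i\phi(\mathrm{rank}_i(\boldsymbol y))$ or $\sum_i z_i\phi\big(\sum_j(1-z_j)\psi_{i,j}(y_i,y_j)\big)$; the result holds for either. $G_{\mathrm R,\phi}(c)=\mathbb P(t_{\mathrm R,\phi}(\boldsymbol A,\boldsymbol y_0)\ge c)$ with $\boldsymbol A$ from the CRE and $\boldsymbol y_0\in\mathbb R^n$ any fixed vector (independent of $\boldsymbol y_0$). *)

theory Defs
  imports "HOL-Library.Extended_Real"
begin

text \<open>Units are indexed by 0,...,n-1. An assignment vector z is represented by the
  set Z of treated units (Z_i = 1 iff i in Z).\<close>

definition cre :: "nat \<Rightarrow> nat \<Rightarrow> nat set set" where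
  "cre n n1 = {Z. Z \<subseteq> {0..<n} \<and> card Z = n1}"

definition prob_cre :: "nat \<Rightarrow> nat \<Rightarrow> (nat set \<Rightarrow> bool) \<Rightarrow> real" where
  "prob_cre n n1 P = real (card {Z \<in> cre n n1. P Z}) / real (card (cre n n1))"

definition psi :: "nat \<Rightarrow> nat \<Rightarrow> ereal \<Rightarrow> ereal \<Rightarrow> nat" where
  "psi i j y y' = (if y > y' then 1 else 0) + (if y = y' \<and> i \<ge> j then 1 else 0)"

definition rank :: "nat \<Rightarrow> nat \<Rightarrow> (nat \<Rightarrow> ereal) \<Rightarrow> nat" where
  "rank n i y = (\<Sum>j<n. psi i j (y i) (y j))"

definition t_R :: "bool \<Rightarrow> (nat \<Rightarrow> real) \<Rightarrow> nat \<Rightarrow> nat set \<Rightarrow> (nat \<Rightarrow> ereal) \<Rightarrow> real" where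
  "t_R version phi n Z y =
     (if version then (\<Sum>i\<in>Z. phi (rank n i y))
      else (\<Sum>i\<in>Z. phi (\<Sum>j\<in>{0..<n} - Z. psi i j (y i) (y j))))"

definition G_R :: "bool \<Rightarrow> (nat \<Rightarrow> real) \<Rightarrow> nat \<Rightarrow> nat \<Rightarrow> (nat \<Rightarrow> real) \<Rightarrow> real \<Rightarrow> real" where
  "G_R version phi n n1 y0 c = prob_cre n n1 (\<lambda>A. t_R version phi n A (\<lambda>i. ereal (y0 i)) \<ge> c)"

definition obs_M :: "(nat \<Rightarrow> bool) \<Rightarrow> (nat \<Rightarrow> bool) \<Rightarrow> nat set \<Rightarrow> nat \<Rightarrow> bool" where
  "obs_M M1 M0 Z i = (if i \<in> Z then M1 i else M0 i)"

definition obs_Y :: "(nat \<Rightarrow> real) \<Rightarrow> (nat \<Rightarrow> real) \<Rightarrow> nat set \<Rightarrow> nat \<Rightarrow> real" where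
  "obs_Y Y1 Y0 Z i = (if i \<in> Z then Y1 i else Y0 i)"

definition Y_mp :: "(nat \<Rightarrow> real) \<Rightarrow> (nat \<Rightarrow> real) \<Rightarrow> (nat \<Rightarrow> bool) \<Rightarrow> (nat \<Rightarrow> bool)
    \<Rightarrow> nat set \<Rightarrow> (nat \<Rightarrow> real) \<Rightarrow> real \<Rightarrow> nat \<Rightarrow> ereal" where
  "Y_mp Y1 Y0 M1 M0 Z \<delta> b i =
     (if i \<in> Z then
        (if obs_M M1 M0 Z i then ereal (min (obs_Y Y1 Y0 Z i - \<delta> i) b) else ereal b)
      else
        (if obs_M M1 M0 Z i then ereal (obs_Y Y1 Y0 Z i) else ereal b))"

definition Y_mn :: "(nat \<Rightarrow> real) \<Rightarrow> (nat \<Rightarrow> real) \<Rightarrow> (nat \<Rightarrow> bool) \<Rightarrow> (nat \<Rightarrow> bool)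
    \<Rightarrow> nat set \<Rightarrow> (nat \<Rightarrow> real) \<Rightarrow> real \<Rightarrow> nat \<Rightarrow> ereal" where
  "Y_mn Y1 Y0 M1 M0 Z \<delta> b i =
     (if i \<in> Z then
        (if obs_M M1 M0 Z i then ereal (obs_Y Y1 Y0 Z i - \<delta> i) else -\<infinity>)
      else
        (if obs_M M1 M0 Z i then ereal (obs_Y Y1 Y0 Z i) else ereal b))"

definition valid_pvalue :: "nat \<Rightarrow> nat \<Rightarrow> (nat set \<Rightarrow> real) \<Rightarrow> bool" where
  "valid_pvalue n n1 p \<longleftrightarrow> (\<forall>\<alpha>::real. 0 < \<alpha> \<and> \<alpha> < 1 \<longrightarrow> prob_cre n n1 (\<lambda>Z. p Z \<le> \<alpha>) \<le> \<alpha>)"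

end

theory Submission
  imports Defs "HOL-Library.Product_Lexorder"
begin

lemma rk_less:
  fixes key :: "nat \<Rightarrow> 'a::linorder"
  assumes "finite A" "i \<in> A" "j \<in> A" "key j < key i"
  shows "card {k\<in>A. key k \<le> key j} < card {k\<in>A. key k \<le> key i}"
proof (rule psubset_card_mono)
  show "finite {k\<in>A. key k \<le> key i}" using assms by simp
  show "{k\<in>A. key k \<le> key j} \<subset> {k\<in>A. key k \<le> key i}"
  proof -
    have "{k\<in>A. key k \<le> key j} \<subseteq> {k\<in>A. key k \<le> key i}"
      using assms by (auto intro: order_trans)
    moreover have "i \<in> {k\<in>A. key k \<le> key i}" "i \<notin> {k\<in>A. key k \<le> key j}"
      using assms by auto
    ultimately show ?thesis by blast
  qed
qed

lemma rk_less_iff: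
  fixes key :: "nat \<Rightarrow> 'a::linorder"
  assumes "finite A" "inj_on key A" "i \<in> A" "j \<in> A"
  shows "key j < key i \<longleftrightarrow> card {k\<in>A. key k \<le> key j} < card {k\<in>A. key k \<le> key i}"
proof
  assume "key j < key i" then show "card {k\<in>A. key k \<le> key j} < card {k\<in>A. key k \<le> key i}"
    using rk_less assms by blast
next
  assume a: "card {k\<in>A. key k \<le> key j} < card {k\<in>A. key k \<le> key i}"
  show "key j < key i"
  proof (rule ccontr)
    assume "\<not> key j < key i"
    then consider "key j = key i" | "key i < key j" by force
    then show False
    proof cases
      case 1 then have "i = j" using assms inj_on_def by metis
      then show False using a by simp
    next
      case 2 then show False using rk_less[OF assms(1,4,3) 2] a by simp
    qed
  qed
qed

lemma rk_bij:
  fixes key :: "nat \<Rightarrow> 'a::linorder"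
  assumes "finite A" "inj_on key A"
  shows "bij_betw (\<lambda>i. card {k\<in>A. key k \<le> key i}) A {1..card A}"
proof -
  let ?r = "\<lambda>i. card {k\<in>A. key k \<le> key i}"
  have inj: "inj_on ?r A"
  proof (rule inj_onI)
    fix i j assume ij: "i \<in> A" "j \<in> A" "?r i = ?r j"
    show "i = j"
    proof (rule ccontr)
      assume "i \<noteq> j"
      then have "key i \<noteq> key j" using ij assms(2) inj_on_def by metis
      then consider "key i < key j" | "key j < key i" by force
      then show False proof cases
        case 1 show False using rk_less[OF assms(1) ij(2,1) 1] ij(3) by simp
      next
        case 2 show False using rk_less[OF assms(1) ij(1,2) 2] ij(3) by simp
      qed
    qed
  qed
  have sub: "?r ` A \<subseteq> {1..card A}"
  proof
    fix x assume "x \<in> ?r ` A"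
    then obtain i where i: "i \<in> A" "x = ?r i" by blast
    have "0 < ?r i" using i assms(1) by (subst card_gt_0_iff) auto
    then have "1 \<le> ?r i" by simp
    moreover have "?r i \<le> card A" using assms(1) by (intro card_mono) auto
    ultimately show "x \<in> {1..card A}" using i by simp
  qed
  have "?r ` A = {1..card A}"
    using sub by (intro card_subset_eq) (auto simp: card_image[OF inj])
  then show ?thesis using inj by (simp add: bij_betw_def)
qed

definition key :: "(nat \<Rightarrow> ereal) \<Rightarrow> nat \<Rightarrow> ereal \<times> nat" where
  "key y j = (y j, j)"

lemma inj_key: "inj_on (key y) A"
  by (auto simp: inj_on_def key_def)

lemma psi_key: "psi i j (y i) (y j) = (if key y j \<le> key y i then 1 else 0)"
  by (auto simp: psi_def key_def)

lemma rank_eq: "rank n i y = card {j\<in>{0..<n}. key y j \<le> key y i}"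
proof -
  have "rank n i y = (\<Sum>j\<in>{0..<n}. if key y j \<le> key y i then 1 else 0)"
    unfolding rank_def psi_key lessThan_atLeast0 ..
  also have "\<dots> = card {j\<in>{0..<n}. key y j \<le> key y i}"
    by (subst sum.inter_filter[symmetric]) auto
  finally show ?thesis .
qed

lemma rank_bij: "bij_betw (\<lambda>i. rank n i y) {0..<n} {1..n}"
  using rk_bij[of "{0..<n}" "key y"] inj_key by (simp add: rank_eq)

lemma rank_less_iff: "i < n \<Longrightarrow> j < n \<Longrightarrow> key y j < key y i \<longleftrightarrow> rank n j y < rank n i y"
  using rk_less_iff[of "{0..<n}" "key y" i j] inj_key by (simp add: rank_eq)


definition F :: "bool \<Rightarrow> (nat \<Rightarrow> real) \<Rightarrow> nat \<Rightarrow> nat set \<Rightarrow> real" where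
  "F v phi n W = (if v then (\<Sum>k\<in>W. phi k) else (\<Sum>k\<in>W. phi (card {m\<in>{1..n}-W. m<k})))"

lemma t_F:
  assumes "Z \<subseteq> {0..<n}"
  shows "t_R v phi n Z y = F v phi n ((\<lambda>i. rank n i y) ` Z)"
proof -
  let ?\<sigma> = "\<lambda>i. rank n i y"
  have bij: "bij_betw ?\<sigma> {0..<n} {1..n}" by (rule rank_bij)
  have injA: "inj_on ?\<sigma> {0..<n}" using bij by (simp add: bij_betw_def)
  have injZ: "inj_on ?\<sigma> Z" using injA assms inj_on_subset by blast
  show ?thesis
  proof (cases v)
    case True
    then show ?thesis by (simp add: t_R_def F_def sum.reindex[OF injZ])
  next
    case False
    have inner: "(\<Sum>j\<in>{0..<n}-Z. psi i j (y i) (y j)) = card {m\<in>{1..n} - ?\<sigma>`Z. m < ?\<sigma> i}"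
      if i: "i\<in>Z" for i
    proof -
      have "(\<Sum>j\<in>{0..<n}-Z. psi i j (y i) (y j)) = (\<Sum>j\<in>{0..<n}-Z. if ?\<sigma> j < ?\<sigma> i then 1 else 0)"
      proof (rule sum.cong[OF refl])
        fix j assume j: "j \<in> {0..<n}-Z"
        then have "j \<noteq> i" using i by auto
        then have "key y j \<noteq> key y i" by (auto simp: key_def)
        hence "key y j \<le> key y i \<longleftrightarrow> key y j < key y i" by auto
        also have "\<dots> \<longleftrightarrow> ?\<sigma> j < ?\<sigma> i" using rank_less_iff[of i n j y] i j assms by auto
        finally show "psi i j (y i) (y j) = (if ?\<sigma> j < ?\<sigma> i then 1 else 0)" by (simp add: psi_key)
      qed
      also have "\<dots> = card {j\<in>{0..<n}-Z. ?\<sigma> j < ?\<sigma> i}"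
        by (subst sum.inter_filter[symmetric]) auto
      also have "\<dots> = card (?\<sigma> ` {j\<in>{0..<n}-Z. ?\<sigma> j < ?\<sigma> i})"
        by (rule card_image[symmetric]) (rule inj_on_subset[OF injA], auto)
      also have "?\<sigma> ` {j\<in>{0..<n}-Z. ?\<sigma> j < ?\<sigma> i} = {m\<in>{1..n} - ?\<sigma>`Z. m < ?\<sigma> i}"
      proof -
        have "?\<sigma> ` ({0..<n}-Z) = ?\<sigma> ` {0..<n} - ?\<sigma>`Z"
          using injA assms by (intro inj_on_image_set_diff) auto
        also have "?\<sigma> ` {0..<n} = {1..n}" using bij by (simp add: bij_betw_def)
        finally have e: "?\<sigma> ` ({0..<n}-Z) = {1..n} - ?\<sigma>`Z" .
        show ?thesis unfolding e[symmetric] by blast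
      qed
      finally show ?thesis .
    qed
    have "t_R v phi n Z y = (\<Sum>i\<in>Z. phi (card {m\<in>{1..n} - ?\<sigma>`Z. m < ?\<sigma> i}))"
      using False inner by (simp add: t_R_def)
    also have "\<dots> = F v phi n (?\<sigma> ` Z)" using False by (simp add: F_def sum.reindex[OF injZ])
    finally show ?thesis .
  qed
qed

lemma count_inv:
  "card {Z\<in>cre n n1. P (t_R v phi n Z y)} = card {W. W \<subseteq> {1..n} \<and> card W = n1 \<and> P (F v phi n W)}"
proof -
  let ?\<sigma> = "\<lambda>i. rank n i y"
  have bij: "bij_betw ?\<sigma> {0..<n} {1..n}" by (rule rank_bij)
  have injA: "inj_on ?\<sigma> {0..<n}" using bij by (simp add: bij_betw_def)
  have imA: "?\<sigma> ` {0..<n} = {1..n}" using bij by (simp add: bij_betw_def)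
  have injP: "inj_on (image ?\<sigma>) (Pow {0..<n})" using injA by (rule inj_on_image_Pow)
  have bP: "bij_betw (image ?\<sigma>) (Pow {0..<n}) (Pow {1..n})" using bij by (rule bij_betw_image_Pow)
  have imP: "image ?\<sigma> ` Pow {0..<n} = Pow {1..n}" using bP by (simp add: bij_betw_def)
  have cardZ: "card (?\<sigma> ` Z) = card Z" if "Z \<subseteq> {0..<n}" for Z
    by (rule card_image) (rule inj_on_subset[OF injA that])
  have img: "image ?\<sigma> ` cre n n1 = {W. W\<subseteq>{1..n} \<and> card W = n1}"
  proof
    show "image ?\<sigma> ` cre n n1 \<subseteq> {W. W\<subseteq>{1..n} \<and> card W = n1}"
    proof
      fix W assume "W \<in> image ?\<sigma> ` cre n n1"
      then obtain Z where Z: "Z \<subseteq> {0..<n}" "card Z = n1" "W = ?\<sigma> ` Z" unfolding cre_def by blast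
      have "W \<subseteq> {1..n}" unfolding Z(3) imA[symmetric] using Z(1) by (rule image_mono)
      moreover have "card W = n1" using Z(2,3) cardZ[OF Z(1)] by simp
      ultimately show "W \<in> {W. W\<subseteq>{1..n} \<and> card W = n1}" by simp
    qed
  next
    show "{W. W\<subseteq>{1..n} \<and> card W = n1} \<subseteq> image ?\<sigma> ` cre n n1"
    proof
      fix W assume W: "W \<in> {W. W\<subseteq>{1..n} \<and> card W = n1}"
      then have "W \<in> Pow {1..n}" by simp
      then have "W \<in> image ?\<sigma> ` Pow {0..<n}" unfolding imP .
      then obtain Z where Z: "Z \<subseteq> {0..<n}" "W = ?\<sigma> ` Z" by blast
      have "card Z = n1" using W Z(2) cardZ[OF Z(1)] by simp
      then have "Z \<in> cre n n1" using Z(1) by (simp add: cre_def)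
      then show "W \<in> image ?\<sigma> ` cre n n1" using Z(2) by (rule rev_image_eqI)
    qed
  qed
  have tF: "t_R v phi n Z y = F v phi n (?\<sigma> ` Z)" if "Z \<in> cre n n1" for Z
    using that by (intro t_F) (simp add: cre_def)
  have e1: "{Z\<in>cre n n1. P (t_R v phi n Z y)} = {Z\<in>cre n n1. P (F v phi n (?\<sigma> ` Z))}"
    by (rule Collect_cong) (use tF in metis)
  have subP: "{Z\<in>cre n n1. P (F v phi n (?\<sigma> ` Z))} \<subseteq> Pow {0..<n}"
    by (auto simp: cre_def)
  have e2: "card {Z\<in>cre n n1. P (F v phi n (?\<sigma> ` Z))} = card (image ?\<sigma> ` {Z\<in>cre n n1. P (F v phi n (?\<sigma> ` Z))})"
    by (rule card_image[symmetric], rule inj_on_subset[OF injP subP])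
  have e3: "image ?\<sigma> ` {Z\<in>cre n n1. P (F v phi n (?\<sigma> ` Z))} = {W \<in> image ?\<sigma> ` cre n n1. P (F v phi n W)}"
  proof (intro equalityI subsetI)
    fix W assume "W \<in> image ?\<sigma> ` {Z\<in>cre n n1. P (F v phi n (?\<sigma> ` Z))}"
    then obtain Z where Z: "Z\<in>cre n n1" "P (F v phi n (?\<sigma>`Z))" "W = ?\<sigma>`Z" by blast
    then show "W \<in> {W \<in> image ?\<sigma> ` cre n n1. P (F v phi n W)}" by blast
  next
    fix W assume "W \<in> {W \<in> image ?\<sigma> ` cre n n1. P (F v phi n W)}"
    then obtain Z where Z: "Z \<in> cre n n1" "W = ?\<sigma>`Z" "P (F v phi n W)" by blast
    then show "W \<in> image ?\<sigma> ` {Z\<in>cre n n1. P (F v phi n (?\<sigma> ` Z))}" by blast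
  qed
  show ?thesis unfolding e1 e2 e3 img by simp
qed

lemma G_R_eq: "G_R v phi n n1 y0 c = prob_cre n n1 (\<lambda>A. c \<le> t_R v phi n A y)"
  unfolding G_R_def prob_cre_def by (simp only: count_inv[where P="\<lambda>x. c \<le> x"])

lemma psi_mono: "a \<le> a' \<Longrightarrow> psi i j a c \<le> psi i j a' c"
  by (auto simp: psi_def)

lemma key_mono: "y k \<le> y' k \<Longrightarrow> key y k \<le> key y' k"
  by (auto simp: key_def)

lemma t_mono:
  assumes Z: "Z \<subseteq> {0..<n}" and ph: "mono phi"
    and le: "\<forall>i\<in>Z. y i \<le> y' i" and eq: "\<forall>i\<in>{0..<n}-Z. y i = y' i"
  shows "t_R v phi n Z y \<le> t_R v phi n Z y'"
proof (cases v)
  case True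
  let ?s = "\<lambda>i. rank n i y" and ?s' = "\<lambda>i. rank n i y'"
  have ctrl: "?s' j \<le> ?s j" if j: "j \<in> {0..<n}-Z" for j
    unfolding rank_eq
  proof (rule card_mono)
    show "finite {k \<in> {0..<n}. key y k \<le> key y j}" by simp
    have kj: "key y j = key y' j" using eq j by (simp add: key_def)
    show "{k \<in> {0..<n}. key y' k \<le> key y' j} \<subseteq> {k \<in> {0..<n}. key y k \<le> key y j}"
    proof safe
      fix k assume k: "k \<in> {0..<n}" "key y' k \<le> key y' j"
      have "key y k \<le> key y' k"
      proof (cases "k \<in> Z")
        case True then show ?thesis using le key_mono by blast
      next
        case False then show ?thesis using eq k by (simp add: key_def)
      qed
      then show "key y k \<le> key y j" using k kj by simp
    qed
  qed
  have tot: "(\<Sum>i\<in>{0..<n}. phi (rank n i x)) = (\<Sum>k\<in>{1..n}. phi k)" for x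
    using sum.reindex_bij_betw[OF rank_bij[of n x], of phi] .
  have spl: "(\<Sum>i\<in>{0..<n}. phi (rank n i x)) = (\<Sum>i\<in>{0..<n}-Z. phi (rank n i x)) + (\<Sum>i\<in>Z. phi (rank n i x))" for x
    using Z by (intro sum.subset_diff) auto
  have "(\<Sum>i\<in>{0..<n}-Z. phi (?s' i)) \<le> (\<Sum>i\<in>{0..<n}-Z. phi (?s i))"
    by (rule sum_mono) (use ctrl ph in \<open>auto simp: mono_def\<close>)
  then have "(\<Sum>i\<in>Z. phi (?s i)) \<le> (\<Sum>i\<in>Z. phi (?s' i))"
    using spl[of y] spl[of y'] tot[of y] tot[of y'] by linarith
  then show ?thesis using True by (simp add: t_R_def rank_def)
next
  case False
  have "(\<Sum>i\<in>Z. phi (\<Sum>j\<in>{0..<n} - Z. psi i j (y i) (y j))) \<le> (\<Sum>i\<in>Z. phi (\<Sum>j\<in>{0..<n} - Z. psi i j (y' i) (y' j)))"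
  proof (rule sum_mono)
    fix i assume i: "i \<in> Z"
    have "(\<Sum>j\<in>{0..<n} - Z. psi i j (y i) (y j)) \<le> (\<Sum>j\<in>{0..<n} - Z. psi i j (y' i) (y' j))"
    proof (rule sum_mono)
      fix j assume "j \<in> {0..<n} - Z"
      then have "y j = y' j" using eq by blast
      then show "psi i j (y i) (y j) \<le> psi i j (y' i) (y' j)" using psi_mono le i by metis
    qed
    then show "phi (\<Sum>j\<in>{0..<n} - Z. psi i j (y i) (y j)) \<le> phi (\<Sum>j\<in>{0..<n} - Z. psi i j (y' i) (y' j))"
      using ph by (simp add: monoD)
  qed
  then show ?thesis using False by (simp add: t_R_def)
qed


lemma finite_cre: "finite (cre n n1)"
  by (rule finite_subset[of _ "Pow {0..<n}"]) (auto simp: cre_def)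

lemma prob_cre_mono:
  assumes "\<forall>Z\<in>cre n n1. P Z \<longrightarrow> Q Z"
  shows "prob_cre n n1 P \<le> prob_cre n n1 Q"
proof -
  have "card {Z \<in> cre n n1. P Z} \<le> card {Z \<in> cre n n1. Q Z}"
    using assms finite_cre by (intro card_mono) auto
  then show ?thesis unfolding prob_cre_def by (intro divide_right_mono) auto
qed

lemma valid_core:
  fixes T :: "nat set \<Rightarrow> real" and \<alpha> :: real
  assumes "0 \<le> \<alpha>"
  shows "prob_cre n n1 (\<lambda>Z. prob_cre n n1 (\<lambda>A. T Z \<le> T A) \<le> \<alpha>) \<le> \<alpha>"
proof -
  let ?G = "\<lambda>c. prob_cre n n1 (\<lambda>A. c \<le> T A)"
  let ?S = "{Z \<in> cre n n1. ?G (T Z) \<le> \<alpha>}"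
  show ?thesis
  proof (cases "?S = {}")
    case True
    have "prob_cre n n1 (\<lambda>Z. ?G (T Z) \<le> \<alpha>) = 0"
    proof -
      have e: "{Z \<in> cre n n1. ?G (T Z) \<le> \<alpha>} = {}" using True .
      show ?thesis unfolding prob_cre_def[of n n1 "\<lambda>Z. ?G (T Z) \<le> \<alpha>"] e by simp
    qed
    then show ?thesis using assms by simp
  next
    case False
    have fS: "finite ?S" using finite_cre by simp
    define m where "m = Min (T ` ?S)"
    have "m \<in> T ` ?S" unfolding m_def using False fS by (intro Min_in) auto
    then obtain Z0 where Z0: "Z0 \<in> ?S" "T Z0 = m" by auto
    have mle: "\<forall>Z\<in>?S. m \<le> T Z" unfolding m_def using fS by auto
    have "prob_cre n n1 (\<lambda>Z. ?G (T Z) \<le> \<alpha>) \<le> ?G (T Z0)"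
      using mle Z0 by (intro prob_cre_mono) auto
    also have "\<dots> \<le> \<alpha>" using Z0 by simp
    finally show ?thesis .
  qed
qed

theorem theorem3:
  fixes n n1 n0 :: nat
    and Y1 Y0 :: "nat \<Rightarrow> real" and M1 M0 :: "nat \<Rightarrow> bool"
    and phi :: "nat \<Rightarrow> real" and version :: bool
    and y0 \<delta> :: "nat \<Rightarrow> real" and b :: real
  assumes "0 < n1" and "0 < n0" and "n1 + n0 = n"
    and "mono phi"
    and H: "\<forall>i<n. Y1 i - Y0 i = \<delta> i"
  shows "((\<forall>i<n. M0 i \<longrightarrow> M1 i) \<longrightarrow>
            valid_pvalue n n1 (\<lambda>Z. G_R version phi n n1 y0
               (t_R version phi n Z (Y_mp Y1 Y0 M1 M0 Z \<delta> b))))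
       \<and> ((\<forall>i<n. M1 i \<longrightarrow> M0 i) \<longrightarrow>
            valid_pvalue n n1 (\<lambda>Z. G_R version phi n n1 y0
               (t_R version phi n Z (Y_mn Y1 Y0 M1 M0 Z \<delta> b))))"
proof -
  define y' where "y' = (\<lambda>i. ereal (if M0 i then Y0 i else b))"
  define T where "T = (\<lambda>Z. t_R version phi n Z y')"
  have G: "G_R version phi n n1 y0 c = prob_cre n n1 (\<lambda>A. c \<le> T A)" for c
    unfolding T_def by (rule G_R_eq)
  have gen: "valid_pvalue n n1 (\<lambda>Z. G_R version phi n n1 y0 (t_R version phi n Z (Yt Z)))"
    if rel: "\<And>Z i. Z \<in> cre n n1 \<Longrightarrow> i \<in> Z \<Longrightarrow> Yt Z i \<le> y' i"
      "\<And>Z i. Z \<in> cre n n1 \<Longrightarrow> i \<in> {0..<n} - Z \<Longrightarrow> Yt Z i = y' i" for Yt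
    unfolding valid_pvalue_def
  proof (intro allI impI)
    fix \<alpha> :: real assume a: "0 < \<alpha> \<and> \<alpha> < 1"
    have "prob_cre n n1 (\<lambda>Z. G_R version phi n n1 y0 (t_R version phi n Z (Yt Z)) \<le> \<alpha>)
        \<le> prob_cre n n1 (\<lambda>Z. prob_cre n n1 (\<lambda>A. T Z \<le> T A) \<le> \<alpha>)"
    proof (rule prob_cre_mono, intro ballI impI)
      fix Z assume Z: "Z \<in> cre n n1" and p: "G_R version phi n n1 y0 (t_R version phi n Z (Yt Z)) \<le> \<alpha>"
      have Zs: "Z \<subseteq> {0..<n}" using Z by (simp add: cre_def)
      have tle: "t_R version phi n Z (Yt Z) \<le> T Z"
        unfolding T_def using rel[OF Z] Zs \<open>mono phi\<close> by (intro t_mono) auto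
      have "prob_cre n n1 (\<lambda>A. T Z \<le> T A) \<le> prob_cre n n1 (\<lambda>A. t_R version phi n Z (Yt Z) \<le> T A)"
        using tle by (intro prob_cre_mono) auto
      then show "prob_cre n n1 (\<lambda>A. T Z \<le> T A) \<le> \<alpha>" using p G by simp
    qed
    also have "\<dots> \<le> \<alpha>" using a by (intro valid_core) auto
    finally show "prob_cre n n1 (\<lambda>Z. G_R version phi n n1 y0 (t_R version phi n Z (Yt Z)) \<le> \<alpha>) \<le> \<alpha>" .
  qed
  show ?thesis
  proof (intro conjI impI)
    assume M: "\<forall>i<n. M0 i \<longrightarrow> M1 i"
    show "valid_pvalue n n1 (\<lambda>Z. G_R version phi n n1 y0 (t_R version phi n Z (Y_mp Y1 Y0 M1 M0 Z \<delta> b)))"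
    proof (rule gen)
      fix Z i assume Z: "Z \<in> cre n n1" and i: "i \<in> Z"
      have "i < n" using Z i by (auto simp: cre_def)
      then have eq: "Y1 i - \<delta> i = Y0 i" using H by auto
      have c: "M0 i \<longrightarrow> M1 i" using M \<open>i < n\<close> by auto
      show "Y_mp Y1 Y0 M1 M0 Z \<delta> b i \<le> y' i"
        using c i eq by (cases "M1 i"; cases "M0 i") (simp_all add: Y_mp_def obs_M_def obs_Y_def y'_def)
    next
      fix Z i assume Z: "Z \<in> cre n n1" and i: "i \<in> {0..<n} - Z"
      then show "Y_mp Y1 Y0 M1 M0 Z \<delta> b i = y' i"
        by (simp add: Y_mp_def obs_M_def obs_Y_def y'_def)
    qed
  next
    assume M: "\<forall>i<n. M1 i \<longrightarrow> M0 i"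
    show "valid_pvalue n n1 (\<lambda>Z. G_R version phi n n1 y0 (t_R version phi n Z (Y_mn Y1 Y0 M1 M0 Z \<delta> b)))"
    proof (rule gen)
      fix Z i assume Z: "Z \<in> cre n n1" and i: "i \<in> Z"
      have "i < n" using Z i by (auto simp: cre_def)
      then have eq: "Y1 i - \<delta> i = Y0 i" using H by auto
      have c: "M1 i \<longrightarrow> M0 i" using M \<open>i < n\<close> by auto
      show "Y_mn Y1 Y0 M1 M0 Z \<delta> b i \<le> y' i"
        using c i eq by (cases "M1 i"; cases "M0 i") (simp_all add: Y_mn_def obs_M_def obs_Y_def y'_def)
    next
      fix Z i assume Z: "Z \<in> cre n n1" and i: "i \<in> {0..<n} - Z"
      then show "Y_mn Y1 Y0 M1 M0 Z \<delta> b i = y' i"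
        by (simp add: Y_mn_def obs_M_def obs_Y_def y'_def)
    qed
  qed
qed

end
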